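(* The function $\sigma$ satisfies $$\lim_{T\to0^+}\sigma(T)=+\infty\qquad\text{and}\qquad\lim_{T\to+\infty}\sigma(T)=-\infty,$$ where $\sigma(T)=c'(1)+\phi_1''(1)$ and $c=c_T$ is the continuous solution on $[0,1]$ of $$c''+(n-1)\frac{C_k(r)}{S_k(r)}c'+\Big[\lambda_1-\Big(\frac{2\pi}{T}\Big)^2\Big]c=0,\qquad c(1)=-\phi_1'(1).$$
   Context: Let $n\ge 2$ and $k\in\{1,-1\}$; $S_k=\sin,\ C_k=\cos$ if $k=1$ and $S_k=\sinh,\ C_k=\cosh$ if $k=-1$ (so that $dr^2+S_k(r)^2d\theta^2$ is the metric of $\mathbb{S}^n$, resp. $\mathbb{H}^n$, in geodesic polar coordinates). $\lambda_1$ is the smallest positive number for which the ODE $u''+(n-1)\frac{C_k(r)}{S_k(r)}u'+\lambda_1u=0$ has a solution $\phi_1$ bounded at $r=0$, positive on $[0,1)$ and vanishing at $r=1$ (the first Dirichlet eigenvalue of the unit geodesic ball); $\phi_1$ is such a solution, normalized so that the function $(x,t)\mapsto\phi_1(\|x\|)$ has $L^2$ norm $1$ on $B_1\times[0,2\pi]$. $\sigma(T)$ coincides with the eigenvalue of the linearized operator $H_T$ on $\cos t$. *)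

theory Defs
  imports "HOL-Analysis.Analysis"
begin

text \<open>S_k and C_k: k = 1 gives the sphere, k = -1 the hyperbolic space.\<close>
definition Sk :: "int \<Rightarrow> real \<Rightarrow> real" where
  "Sk k r = (if k = 1 then sin r else sinh r)"

definition Ck :: "int \<Rightarrow> real \<Rightarrow> real" where
  "Ck k r = (if k = 1 then cos r else cosh r)"

definition radial_sol ::
  "nat \<Rightarrow> int \<Rightarrow> real \<Rightarrow> (real \<Rightarrow> real) \<Rightarrow> (real \<Rightarrow> real) \<Rightarrow> (real \<Rightarrow> real) \<Rightarrow> bool" where
  "radial_sol n k mu u u' u'' \<longleftrightarrow>
     (\<forall>r\<in>{0<..1}. (u has_real_derivative u' r) (at r within {0<..1}) \<and>
                  (u' has_real_derivative u'' r) (at r within {0<..1}) \<and>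
                  u'' r + (real n - 1) * (Ck k r / Sk k r) * u' r + mu * u r = 0)"

definition dirichlet_eigenfunction ::
  "nat \<Rightarrow> int \<Rightarrow> real \<Rightarrow> (real \<Rightarrow> real) \<Rightarrow> (real \<Rightarrow> real) \<Rightarrow> (real \<Rightarrow> real) \<Rightarrow> bool" where
  "dirichlet_eigenfunction n k mu u u' u'' \<longleftrightarrow>
     radial_sol n k mu u u' u'' \<and> bounded (u ` {0<..1}) \<and>
     (\<forall>r\<in>{0..<1}. u r > 0) \<and> u 1 = 0"

definition first_eigenvalue :: "nat \<Rightarrow> int \<Rightarrow> real \<Rightarrow> bool" where
  "first_eigenvalue n k lam \<longleftrightarrow>
     (let E = {mu. mu > 0 \<and> (\<exists>u u' u''. dirichlet_eigenfunction n k mu u u' u'')}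
      in lam \<in> E \<and> (\<forall>mu\<in>E. lam \<le> mu))"

definition sphere_area :: "nat \<Rightarrow> real" where
  "sphere_area n = 2 * pi powr (real n / 2) / Gamma (real n / 2)"

text \<open>L^2 norm of (x,t) \<mapsto> u(|x|) over B_1 \<times> [0,2 pi] equals 1, written in geodesic polar
  coordinates: volume element S_k(r)^(n-1) dr d\<theta> dt.\<close>
definition L2_normalized :: "nat \<Rightarrow> int \<Rightarrow> (real \<Rightarrow> real) \<Rightarrow> bool" where
  "L2_normalized n k u \<longleftrightarrow>
     (\<lambda>r. (u r)\<^sup>2 * (Sk k r) ^ (n - 1)) integrable_on {0..1} \<and>
     2 * pi * sphere_area n * integral {0..1} (\<lambda>r. (u r)\<^sup>2 * (Sk k r) ^ (n - 1)) = 1"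

end

theory Submission
  imports Defs
begin


lemma der_at:
  assumes "(f has_real_derivative D) (at x within {0<..1})" "0 < x" "x < 1"
  shows "(f has_real_derivative D) (at x)"
proof -
  have "(f has_real_derivative D) (at x within {0<..<1})"
    by (rule DERIV_subset[OF assms(1)]) auto
  then show ?thesis using at_within_open[of x "{0<..<(1::real)}"] assms by auto
qed

lemma mvt01:
  fixes f f' :: "real \<Rightarrow> real"
  assumes "0 < a" "a < b" "b \<le> 1"
    and d: "\<And>x. x \<in> {0<..1} \<Longrightarrow> (f has_real_derivative f' x) (at x within {0<..1})"
  obtains \<xi> where "a<\<xi>" "\<xi><b" "f b - f a = f' \<xi> * (b - a)"
proof -
  have "continuous_on {a..b} f"
    by (rule DERIV_continuous_on[where D=f'], rule DERIV_subset[OF d]) (use assms in auto)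
  moreover have "\<And>x. a < x \<Longrightarrow> x < b \<Longrightarrow> (f has_derivative (\<lambda>h. f' x * h)) (at x)"
  proof -
    fix x assume "a < x" "x < b"
    then have "(f has_real_derivative f' x) (at x)" using der_at[OF d] assms by auto
    then show "(f has_derivative (\<lambda>h. f' x * h)) (at x)" unfolding has_field_derivative_def by simp
  qed
  ultimately obtain \<xi> where "a<\<xi>" "\<xi><b" "f b - f a = f' \<xi> * (b - a)"
    using mvt[OF assms(2), of f "\<lambda>x h. f' x * h"] by blast
  then show ?thesis using that by blast
qed



definition pp :: "nat \<Rightarrow> int \<Rightarrow> real \<Rightarrow> real" where
  "pp n k r = Sk k r ^ (n - 1)"

lemma Sk_deriv: "(Sk k has_real_derivative Ck k r) (at r within s)"
proof (cases "k = 1")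
  case True
  then show ?thesis unfolding Sk_def[abs_def] Ck_def
    by (auto intro!: derivative_eq_intros)
next
  case False
  then show ?thesis unfolding Sk_def[abs_def] Ck_def
    by (auto intro!: derivative_eq_intros)
qed

lemma Sk_pos: assumes "0 < r" "r \<le> 1" shows "Sk k r > 0"
proof (cases "k = 1")
  case True
  have "r < pi" using assms pi_gt3 by linarith
  then show ?thesis using True assms sin_gt_zero unfolding Sk_def by auto
next
  case False
  then show ?thesis using assms unfolding Sk_def by auto
qed

lemma Sk_le: assumes "0 < r" "r \<le> 1" shows "Sk k r \<le> 2 * r"
proof (cases "k = 1")
  case True
  then show ?thesis using assms sin_x_le_x[of r] unfolding Sk_def by auto
next
  case False
  have d: "\<And>x. (sinh has_real_derivative cosh x) (at x)"
    by (auto intro!: derivative_eq_intros)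
  obtain \<xi> where \<xi>: "0 < \<xi>" "\<xi> < r" "sinh r - sinh 0 = (r - 0) * cosh \<xi>"
    using MVT2[OF assms(1), of sinh cosh] d by blast
  have "cosh \<xi> \<le> cosh 1" using \<xi> assms cosh_real_nonneg_le_iff[of \<xi> 1] by auto
  also have "cosh (1::real) \<le> 2"
  proof -
    have "exp (-1::real) \<le> 1" by simp
    then have "exp 1 + exp (-1) \<le> (4::real)" using exp_le by linarith
    then show ?thesis unfolding cosh_def by simp
  qed
  finally have "cosh \<xi> \<le> 2" .
  then have "sinh r \<le> r * 2" using \<xi> assms mult_left_mono[of "cosh \<xi>" 2 r] by auto
  then show ?thesis using False unfolding Sk_def by auto
qed

lemma pp_pos: "0 < r \<Longrightarrow> r \<le> 1 \<Longrightarrow> pp n k r > 0"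
  unfolding pp_def using Sk_pos by auto

lemma pp_le: assumes "n \<ge> 2" "0 < r" "r \<le> 1" shows "pp n k r \<le> 2 ^ (n - 1) * r"
proof -
  have "pp n k r \<le> (2 * r) ^ (n - 1)"
    unfolding pp_def using Sk_le[OF assms(2,3), of k] less_imp_le[OF Sk_pos[OF assms(2,3), of k]]
    by (intro power_mono) auto
  also have "\<dots> = 2 ^ (n - 1) * r ^ (n - 1)" by (simp add: power_mult_distrib)
  also have "r ^ (n - 1) \<le> r ^ 1"
    using assms by (intro power_decreasing) auto
  hence "2 ^ (n - 1) * r ^ (n - 1) \<le> 2 ^ (n - 1) * r" by simp
  finally show ?thesis .
qed

lemma pp_deriv: "(pp n k has_real_derivative (real (n - 1) * (Ck k r * Sk k r ^ (n - 2))))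
   (at r within s)"
  unfolding pp_def[abs_def]
  using DERIV_power[OF Sk_deriv[of k r s], of "n - 1"] by (simp add: numeral_2_eq_2)

lemma flux_deriv:
  assumes "n \<ge> 2" and rs: "radial_sol n k mu u u' u''" and r: "r \<in> {0<..1}"
  shows "((\<lambda>r. pp n k r * u' r) has_real_derivative (- mu * pp n k r * u r)) (at r within {0<..1})"
proof -
  from rs r have d2: "(u' has_real_derivative u'' r) (at r within {0<..1})"
    and eq: "u'' r + (real n - 1) * (Ck k r / Sk k r) * u' r + mu * u r = 0"
    unfolding radial_sol_def by auto
  have S: "Sk k r > 0" using Sk_pos r by auto
  have d: "((\<lambda>r. pp n k r * u' r) has_real_derivative
     pp n k r * u'' r + (real (n - 1) * (Ck k r * Sk k r ^ (n - 2))) * u' r) (at r within {0<..1})"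
    by (rule DERIV_mult'[OF pp_deriv d2])
  have pn: "pp n k r = Sk k r * Sk k r ^ (n - 2)"
    unfolding pp_def using assms(1) by (metis Suc_diff_Suc Suc_1 diff_Suc_1 le_add_diff_inverse2 numeral_2_eq_2 power_Suc  Suc_le_eq)
  have u2: "u'' r = - (real n - 1) * (Ck k r / Sk k r) * u' r - mu * u r" using eq by linarith
  have "pp n k r * u'' r + (real (n - 1) * (Ck k r * Sk k r ^ (n - 2))) * u' r = - mu * pp n k r * u r"
    unfolding u2 pn using S assms(1) by (simp add: field_simps of_nat_diff)
  then show ?thesis using d by simp
qed



lemma radial_neg:
  assumes "radial_sol n k mu u u' u''"
  shows "radial_sol n k mu (\<lambda>r. - u r) (\<lambda>r. - u' r) (\<lambda>r. - u'' r)"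
  unfolding radial_sol_def
proof
  fix r :: real assume r: "r \<in> {0<..1}"
  then have a: "(u has_real_derivative u' r) (at r within {0<..1})"
    "(u' has_real_derivative u'' r) (at r within {0<..1})"
    "u'' r + (real n - 1) * (Ck k r / Sk k r) * u' r + mu * u r = 0"
    using assms unfolding radial_sol_def by auto
  have e: "- u'' r + X * (- u' r) + mu * (- u r) = - (u'' r + X * u' r + mu * u r)" for X
    by (simp add: algebra_simps)
  have "- u'' r + (real n - 1) * (Ck k r / Sk k r) * (- u' r) + mu * (- u r) = 0"
    using a(3) e[of "(real n - 1) * (Ck k r / Sk k r)"] by simp
  then show "((\<lambda>r. - u r) has_real_derivative - u' r) (at r within {0<..1}) \<and>
     ((\<lambda>r. - u' r) has_real_derivative - u'' r) (at r within {0<..1}) \<and>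
     - u'' r + (real n - 1) * (Ck k r / Sk k r) * - u' r + mu * - u r = 0"
    using a by (auto intro!: DERIV_minus)
qed

lemma flux_lip:
  assumes "n \<ge> 2" and rs: "radial_sol n k mu u u' u''"
    and B: "\<forall>r\<in>{0<..1}. \<bar>u r\<bar> \<le> B"
    and xy: "0 < x" "x \<le> y" "y \<le> 1"
  shows "\<bar>pp n k y * u' y - pp n k x * u' x\<bar> \<le> \<bar>mu\<bar> * 2 ^ (n - 1) * B * (y - x)"
proof (cases "x = y")
  case True then show ?thesis by simp
next
  case False
  then have "x < y" using xy by simp
  obtain \<xi> where \<xi>: "x < \<xi>" "\<xi> < y"
    "pp n k y * u' y - pp n k x * u' x = (- mu * pp n k \<xi> * u \<xi>) * (y - x)"
    using mvt01[OF xy(1) \<open>x < y\<close> xy(3), of "\<lambda>r. pp n k r * u' r" "\<lambda>r. - mu * pp n k r * u r"]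
      flux_deriv[OF assms(1) rs] by blast
  have p1: "pp n k \<xi> \<le> 2 ^ (n - 1)"
    using pp_le[OF assms(1), of \<xi> k] \<xi> xy by (smt (verit) mult_left_le mult_nonneg_nonneg zero_le_power)
  have p0: "pp n k \<xi> > 0" using pp_pos \<xi> xy by auto
  have u1: "\<bar>u \<xi>\<bar> \<le> B" using B \<xi> xy by auto
  have "\<bar>- mu * pp n k \<xi> * u \<xi>\<bar> = \<bar>mu\<bar> * pp n k \<xi> * \<bar>u \<xi>\<bar>" using p0 by (simp add: abs_mult)
  also have "\<dots> \<le> \<bar>mu\<bar> * 2 ^ (n - 1) * B"
    by (intro mult_mono) (use p1 u1 p0 in auto)
  finally have "\<bar>- mu * pp n k \<xi> * u \<xi>\<bar> * (y - x) \<le> \<bar>mu\<bar> * 2 ^ (n - 1) * B * (y - x)"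
    using \<open>x < y\<close> by (intro mult_right_mono) auto
  then show ?thesis using \<xi>(3) \<open>x < y\<close> by (simp add: abs_mult)
qed

lemma flux_upper:
  assumes "n \<ge> 2" and rs: "radial_sol n k mu u u' u''"
    and B: "\<forall>r\<in>{0<..1}. \<bar>u r\<bar> \<le> B"
    and s: "0 < s" "s \<le> 1/2"
  shows "pp n k s * u' s \<le> 2 * (\<bar>mu\<bar> * 2 ^ (n - 1) * B) * s"
proof (rule ccontr)
  define K where "K = \<bar>mu\<bar> * 2 ^ (n - 1) * B"
  define h where "h r = pp n k r * u' r" for r
  assume "\<not> ?thesis"
  then have hs: "h s > 2 * K * s" unfolding K_def h_def by simp
  have B0: "B \<ge> 0" using B s by (meson abs_ge_zero greaterThanAtMost_iff order.trans one_le_numeral le_divide_eq_1_pos linorder_not_le order_le_less_trans zero_less_one less_eq_real_def field_sum_of_halves)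
  then have K0: "K \<ge> 0" unfolding K_def by simp
  have hpos: "h s > 0" using hs K0 s by (smt (verit) mult_nonneg_nonneg)
  define C :: real where "C = 2 ^ (n - 1)"
  have C0: "C > 0" unfolding C_def by simp
  define A where "A = h s / (2 * C)"
  have A0: "A > 0" unfolding A_def using hpos C0 by simp
  have ud: "u' r \<ge> A / r" if r: "0 < r" "r \<le> s" for r
  proof -
    have "\<bar>h s - h r\<bar> \<le> K * (s - r)"
      using flux_lip[OF assms(1) rs B r(1) r(2)] s unfolding h_def K_def by simp
    then have "h r \<ge> h s - K * s" using r K0 by (smt (verit) mult_left_mono)
    then have hr: "h r \<ge> h s / 2" using hs by simp
    have pr: "pp n k r > 0" "pp n k r \<le> C * r"
      using pp_pos[of r n k] pp_le[OF assms(1), of r k] r s unfolding C_def by auto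
    have "A / r = (h s / 2) / (C * r)" unfolding A_def by (simp add: field_simps)
    also have "\<dots> \<le> (h s / 2) / pp n k r"
      using pr hpos by (intro divide_left_mono) auto
    also have "\<dots> \<le> h r / pp n k r" using hr pr by (intro divide_right_mono) auto
    also have "\<dots> = u' r" unfolding h_def using pr by simp
    finally show ?thesis .
  qed
  define r where "r = s * exp (- (2 * B / A) - 1)"
  have r0: "r > 0" unfolding r_def using s by simp
  have "2 * B / A \<ge> 0" using B0 A0 by simp
  then have "exp (- (2 * B / A) - 1) < 1" by simp
  then have rs': "r < s" unfolding r_def using s by simp
  have gd: "((\<lambda>x. u x - A * ln x) has_real_derivative (u' x - A * inverse x)) (at x within {0<..1})"
    if "x \<in> {0<..1}" for x
    using rs that unfolding radial_sol_def
    by (auto intro!: derivative_eq_intros simp: divide_inverse)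
  obtain \<xi> where \<xi>: "r < \<xi>" "\<xi> < s" "(u s - A * ln s) - (u r - A * ln r) = (u' \<xi> - A * inverse \<xi>) * (s - r)"
    using mvt01[OF r0 rs', of "\<lambda>x. u x - A * ln x" "\<lambda>x. u' x - A * inverse x"] gd s by auto
  have "u' \<xi> - A * inverse \<xi> \<ge> 0" using ud[of \<xi>] \<xi> r0 by (simp add: field_simps)
  then have "(u s - A * ln s) - (u r - A * ln r) \<ge> 0" using \<xi> by simp
  moreover have "ln r = ln s - 2 * B / A - 1" unfolding r_def using s by (simp add: ln_mult)
  ultimately have "u r \<le> u s - 2 * B - A"
  proof -
    assume d: "(u s - A * ln s) - (u r - A * ln r) \<ge> 0" and l: "ln r = ln s - 2 * B / A - 1"
    have "A * (ln s - ln r) = 2 * B + A" using l A0 by (simp add: field_simps)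
    then show ?thesis using d by (simp add: right_diff_distrib)
  qed
  moreover have "\<bar>u r\<bar> \<le> B" "\<bar>u s\<bar> \<le> B" using B r0 rs' s by auto
  ultimately show False using A0 by linarith
qed

lemma flux_lim:
  assumes "n \<ge> 2" and rs: "radial_sol n k mu u u' u''"
    and bd: "bounded (u ` {0<..1})"
  shows "((\<lambda>r. pp n k r * u' r) \<longlongrightarrow> 0) (at_right 0)"
proof -
  obtain B where B: "\<forall>r\<in>{0<..1}. \<bar>u r\<bar> \<le> B"
    using bd unfolding bounded_iff by auto
  define K where "K = 2 * (\<bar>mu\<bar> * 2 ^ (n - 1) * B)"
  have up: "pp n k s * u' s \<le> K * s" if "0 < s" "s \<le> 1/2" for s
    using flux_upper[OF assms(1) rs B that] unfolding K_def by simp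
  have B': "\<forall>r\<in>{0<..1}. \<bar>- u r\<bar> \<le> B" using B by simp
  have lo: "pp n k s * (- u' s) \<le> K * s" if "0 < s" "s \<le> 1/2" for s
    using flux_upper[OF assms(1) radial_neg[OF rs] B' that] unfolding K_def by simp
  have lo: "- (K * s) \<le> pp n k s * u' s" if "0 < s" "s \<le> 1/2" for s
    using lo[OF that] by linarith
  have ev: "eventually (\<lambda>s. 0 < s \<and> s \<le> 1/2) (at_right (0::real))"
    unfolding eventually_at_right_field by (rule exI[of _ "1/2"]) auto
  show ?thesis
  proof (rule tendsto_sandwich[of "\<lambda>s. - (K * s)" _ _ "\<lambda>s. K * s"])
    show "\<forall>\<^sub>F s in at_right 0. - (K * s) \<le> pp n k s * u' s"
      using ev by eventually_elim (use lo in force)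
    show "\<forall>\<^sub>F s in at_right 0. pp n k s * u' s \<le> K * s"
      using ev by eventually_elim (use up in auto)
    have "((\<lambda>s. K * s) \<longlongrightarrow> K * 0) (at_right (0::real))"
      by (intro tendsto_intros)
    then show "((\<lambda>s. K * s) \<longlongrightarrow> 0) (at_right (0::real))" by simp
    then show "((\<lambda>s. - (K * s)) \<longlongrightarrow> 0) (at_right (0::real))"
      using tendsto_minus by fastforce
  qed
qed



lemma Sk_cont: "continuous_on A (Sk k)"
  using Sk_deriv by (metis DERIV_continuous_on)

lemma Ck_cont: "continuous_on A (Ck k)"
proof (cases "k = 1")
  case True
  then have "Ck k = cos" by (auto simp: Ck_def fun_eq_iff)
  then show ?thesis by (auto intro!: continuous_intros)
next
  case False
  then have "Ck k = cosh" by (auto simp: Ck_def fun_eq_iff)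
  then show ?thesis by (auto intro!: continuous_intros)
qed

lemma coef_bound:
  obtains Q where "\<forall>r\<in>{1/2..1}. \<bar>(real n - 1) * (Ck k r / Sk k r)\<bar> \<le> Q"
proof -
  have "continuous_on {1/2..1} (\<lambda>r. (real n - 1) * (Ck k r / Sk k r))"
    by (intro continuous_intros Ck_cont Sk_cont) (use Sk_pos in \<open>auto simp: less_imp_neq[symmetric]\<close>)
  then have "compact ((\<lambda>r. (real n - 1) * (Ck k r / Sk k r)) ` {1/2..1})"
    by (intro compact_continuous_image) auto
  then obtain Q where "\<forall>x\<in>(\<lambda>r. (real n - 1) * (Ck k r / Sk k r)) ` {1/2..1}. norm x \<le> Q"
    using compact_imp_bounded bounded_iff by metis
  then show ?thesis using that by auto
qed

lemma hopf:
  assumes rs: "radial_sol n k lam phi phi' phi''"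
    and pos: "\<forall>r\<in>{0..<1}. phi r > 0" and z: "phi 1 = 0"
  shows "phi' 1 < 0"
proof -
  have d1: "(phi has_real_derivative phi' 1) (at 1 within {0<..1})"
    using rs unfolding radial_sol_def by auto
  have le: "phi' 1 \<le> 0"
  proof (rule ccontr)
    assume "\<not> phi' 1 \<le> 0"
    then obtain d where d: "d > 0" "\<forall>h>0. 1 - h \<in> {0<..1} \<longrightarrow> h < d \<longrightarrow> phi (1 - h) < phi 1"
      using has_real_derivative_pos_inc_left[OF d1] by auto
    define h where "h = min (d/2) (1/2)"
    have "phi (1 - h) < 0" using d z unfolding h_def by auto
    moreover have "phi (1 - h) > 0" using pos d unfolding h_def by auto
    ultimately show False by simp
  qed
  show ?thesis
  proof (rule ccontr)
    assume "\<not> phi' 1 < 0"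
    then have z': "phi' 1 = 0" using le by simp
    obtain Q where Q: "\<forall>r\<in>{1/2..1}. \<bar>(real n - 1) * (Ck k r / Sk k r)\<bar> \<le> Q"
      using coef_bound by blast
    define L where "L = 1 + 2 * Q + \<bar>lam\<bar>"
    define g where "g r = ((phi r)\<^sup>2 + (phi' r)\<^sup>2) * exp (L * r)" for r
    define g' where "g' r = (2 * phi r * phi' r + 2 * phi' r * phi'' r + L * ((phi r)\<^sup>2 + (phi' r)\<^sup>2)) * exp (L * r)" for r
    have gd: "(g has_real_derivative g' r) (at r within {0<..1})" if "r \<in> {0<..1}" for r
    proof -
      have a: "(phi has_real_derivative phi' r) (at r within {0<..1})"
        "(phi' has_real_derivative phi'' r) (at r within {0<..1})"
        using rs that unfolding radial_sol_def by auto
      show ?thesis unfolding g_def[abs_def] g'_def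
        by (rule derivative_eq_intros a refl | simp)+ (simp add: algebra_simps)
    qed
    obtain \<xi> where \<xi>: "1/2 < \<xi>" "\<xi> < 1" "g 1 - g (1/2) = g' \<xi> * (1 - 1/2)"
      using mvt01[of "1/2" 1 g g'] gd by auto
    have "g' \<xi> \<ge> 0"
    proof -
      define p where "p = phi \<xi>"
      define q where "q = phi' \<xi>"
      define X where "X = (real n - 1) * (Ck k \<xi> / Sk k \<xi>)"
      have "\<xi> \<in> {0<..1}" using \<xi> by auto
      then have "phi'' \<xi> + X * q + lam * p = 0"
        using rs unfolding radial_sol_def X_def p_def q_def by blast
      then have eq: "phi'' \<xi> = - X * q - lam * p" by linarith
      have "\<xi> \<in> {1/2..1}" using \<xi> by auto
      then have XQ': "\<bar>X\<bar> \<le> Q" using Q unfolding X_def by blast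
      then have XQ: "X \<le> Q" by linarith
      have Q0: "Q \<ge> 0" using XQ' by linarith
      have f1: "p\<^sup>2 + q\<^sup>2 + 2 * p * q \<ge> 0" using power2_eq_square[of "p+q"]
        by (smt (verit) zero_le_power2 power2_sum)
      have f2: "2 * Q * q\<^sup>2 - 2 * X * q\<^sup>2 \<ge> 0" using XQ by (simp add: left_diff_distrib[symmetric])
      have f3: "\<bar>lam\<bar> * (p\<^sup>2 + q\<^sup>2) - 2 * lam * p * q \<ge> 0"
      proof (cases "lam \<ge> 0")
        case True
        have "0 \<le> lam * (p - q)\<^sup>2" using True by simp
        then show ?thesis using True by (simp add: power2_diff algebra_simps)
      next
        case False
        have "0 \<le> (- lam) * (p + q)\<^sup>2" using False by (intro mult_nonneg_nonneg) auto
        then show ?thesis using False by (simp add: power2_sum algebra_simps)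
      qed
      have f4: "2 * Q * p\<^sup>2 \<ge> 0" using Q0 by simp
      have "2 * p * q + 2 * q * (- X * q - lam * p) + L * (p\<^sup>2 + q\<^sup>2) \<ge> 0"
        using f1 f2 f3 f4 unfolding L_def by (simp add: algebra_simps power2_eq_square)
      then show ?thesis unfolding g'_def eq[symmetric] p_def[symmetric] q_def[symmetric] by simp
    qed
    moreover have "g 1 = 0" unfolding g_def using z z' by simp
    moreover have "g (1/2) > 0"
    proof -
      have "phi (1/2) > 0" using pos by auto
      then have "(phi (1/2))\<^sup>2 + (phi' (1/2))\<^sup>2 > 0" by (simp add: add_pos_nonneg)
      then show ?thesis unfolding g_def by simp
    qed
    ultimately show False using \<xi> by simp
  qed
qed



lemma null_times_bounded:
  fixes f g :: "real \<Rightarrow> real"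
  assumes "(f \<longlongrightarrow> 0) F" "eventually (\<lambda>x. \<bar>g x\<bar> \<le> B) F"
  shows "((\<lambda>x. f x * g x) \<longlongrightarrow> 0) F"
proof (rule Lim_null_comparison[where g = "\<lambda>x. \<bar>f x\<bar> * B"])
  show "\<forall>\<^sub>F x in F. norm (f x * g x) \<le> \<bar>f x\<bar> * B"
    using assms(2) by eventually_elim (simp add: abs_mult mult_left_mono)
  have "((\<lambda>x. \<bar>f x\<bar>) \<longlongrightarrow> 0) F" using assms(1) tendsto_rabs_zero by blast
  then show "((\<lambda>x. \<bar>f x\<bar> * B) \<longlongrightarrow> 0) F" by (rule tendsto_mult_left_zero)
qed

definition GG :: "nat \<Rightarrow> int \<Rightarrow> (real \<Rightarrow> real) \<Rightarrow> (real \<Rightarrow> real) \<Rightarrow> (real \<Rightarrow> real) \<Rightarrow> (real \<Rightarrow> real) \<Rightarrow> real \<Rightarrow> real" where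
  "GG n k c c' phi phi' r = pp n k r * (c' r * phi r - c r * phi' r)"

lemma GG_deriv:
  assumes "n \<ge> 2" and rsp: "radial_sol n k lam phi phi' phi''"
    and rsc: "radial_sol n k mu c c' c''" and r: "r \<in> {0<..1}"
  shows "(GG n k c c' phi phi' has_real_derivative ((lam - mu) * pp n k r * c r * phi r)) (at r within {0<..1})"
proof -
  have dp: "(phi has_real_derivative phi' r) (at r within {0<..1})"
    and dc: "(c has_real_derivative c' r) (at r within {0<..1})"
    using rsp rsc r unfolding radial_sol_def by auto
  have "((\<lambda>r. (pp n k r * c' r) * phi r - c r * (pp n k r * phi' r)) has_real_derivative
     ((pp n k r * c' r) * phi' r + (- mu * pp n k r * c r) * phi r
      - (c r * (- lam * pp n k r * phi r) + c' r * (pp n k r * phi' r)))) (at r within {0<..1})"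
    by (intro DERIV_diff DERIV_mult' flux_deriv[OF assms(1) rsc r] flux_deriv[OF assms(1) rsp r] dp dc)
  moreover have "(\<lambda>r. (pp n k r * c' r) * phi r - c r * (pp n k r * phi' r)) = GG n k c c' phi phi'"
    unfolding GG_def by (auto simp: fun_eq_iff algebra_simps)
  moreover have "(pp n k r * c' r) * phi' r + (- mu * pp n k r * c r) * phi r
      - (c r * (- lam * pp n k r * phi r) + c' r * (pp n k r * phi' r)) = (lam - mu) * pp n k r * c r * phi r"
    by (simp add: algebra_simps)
  ultimately show ?thesis by simp
qed

lemma GG_lim:
  assumes "n \<ge> 2" and rsp: "radial_sol n k lam phi phi' phi''" and bp: "bounded (phi ` {0<..1})"
    and rsc: "radial_sol n k mu c c' c''" and bc: "bounded (c ` {0<..1})"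
  shows "(GG n k c c' phi phi' \<longlongrightarrow> 0) (at_right 0)"
proof -
  obtain B1 where B1: "\<forall>r\<in>{0<..1}. \<bar>phi r\<bar> \<le> B1" using bp unfolding bounded_iff by auto
  obtain B2 where B2: "\<forall>r\<in>{0<..1}. \<bar>c r\<bar> \<le> B2" using bc unfolding bounded_iff by auto
  have ev: "eventually (\<lambda>s. s \<in> {0<..1}) (at_right (0::real))"
    unfolding eventually_at_right_field by (rule exI[of _ 1]) auto
  have e1: "eventually (\<lambda>r. \<bar>phi r\<bar> \<le> B1) (at_right 0)"
    using ev by eventually_elim (use B1 in auto)
  have e2: "eventually (\<lambda>r. \<bar>c r\<bar> \<le> B2) (at_right 0)"
    using ev by eventually_elim (use B2 in auto)
  have t1: "((\<lambda>r. (pp n k r * c' r) * phi r) \<longlongrightarrow> 0) (at_right 0)"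
    by (rule null_times_bounded[OF flux_lim[OF assms(1) rsc bc] e1])
  have t2: "((\<lambda>r. (pp n k r * phi' r) * c r) \<longlongrightarrow> 0) (at_right 0)"
    by (rule null_times_bounded[OF flux_lim[OF assms(1) rsp bp] e2])
  have "((\<lambda>r. (pp n k r * c' r) * phi r - (pp n k r * phi' r) * c r) \<longlongrightarrow> 0 - 0) (at_right 0)"
    by (intro tendsto_diff t1 t2)
  moreover have "(\<lambda>r. (pp n k r * c' r) * phi r - (pp n k r * phi' r) * c r) = GG n k c c' phi phi'"
    unfolding GG_def by (auto simp: fun_eq_iff algebra_simps)
  ultimately show ?thesis by simp
qed



lemma positivity:
  assumes n2: "n \<ge> 2" and rsp: "radial_sol n k lam phi phi' phi''"
    and posp: "\<forall>r\<in>{0..<1}. phi r > 0" and bp: "bounded (phi ` {0<..1})"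
    and eps: "\<epsilon> > 0" and rsc: "radial_sol n k (lam - \<epsilon>) c c' c''"
    and cc: "continuous_on {0..1} c" and c1: "c 1 > 0"
    and r0: "0 < r0" "r0 < 1"
  shows "c r0 \<ge> 0"
proof (rule ccontr)
  assume "\<not> c r0 \<ge> 0"
  then have cr0: "c r0 < 0" by simp
  define G where "G = GG n k c c' phi phi'"
  have Gd: "(G has_real_derivative (\<epsilon> * pp n k r * c r * phi r)) (at r within {0<..1})"
    if "r \<in> {0<..1}" for r
    using GG_deriv[OF n2 rsp rsc that] unfolding G_def by simp
  have bc: "bounded (c ` {0<..1})"
  proof -
    have "compact (c ` {0..1})" by (intro compact_continuous_image cc) auto
    then have "bounded (c ` {0..1})" by (rule compact_imp_bounded)
    then show ?thesis by (rule bounded_subset) auto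
  qed
  have Glim: "(G \<longlongrightarrow> 0) (at_right 0)"
    unfolding G_def by (rule GG_lim[OF n2 rsp bp rsc bc])
  have dc: "(c has_real_derivative c' r) (at r within {0<..1})" if "r \<in> {0<..1}" for r
    using rsc that unfolding radial_sol_def by auto
  have dec: "G y < G x" if xy: "0 < x" "x < y" "y \<le> 1" and neg: "\<forall>z. x < z \<and> z < y \<longrightarrow> c z < 0" for x y
  proof -
    obtain \<xi> where \<xi>: "x < \<xi>" "\<xi> < y" "G y - G x = (\<epsilon> * pp n k \<xi> * c \<xi> * phi \<xi>) * (y - x)"
      using mvt01[OF xy, of G "\<lambda>r. \<epsilon> * pp n k r * c r * phi r"] Gd by blast
    have "pp n k \<xi> > 0" using pp_pos \<xi> xy by auto
    moreover have "phi \<xi> > 0" using posp \<xi> xy by auto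
    moreover have "c \<xi> < 0" using neg \<xi> by auto
    ultimately have "\<epsilon> * pp n k \<xi> * c \<xi> * phi \<xi> < 0" using eps
      by (simp add: mult_pos_neg mult_neg_pos)
    then have "(\<epsilon> * pp n k \<xi> * c \<xi> * phi \<xi>) * (y - x) < 0" using xy by (simp add: mult_neg_pos)
    then show ?thesis using \<xi> by simp
  qed
  have ccs: "continuous_on {a..b} c" if "0 \<le> a" "b \<le> 1" for a b
    by (rule continuous_on_subset[OF cc]) (use that in auto)
  define Z1 where "Z1 = {r0..1} \<inter> c -` {0}"
  have "closed Z1" unfolding Z1_def
    by (rule continuous_closed_preimage) (use ccs r0 in auto)
  then have cZ1: "compact Z1" unfolding Z1_def by (simp add: compact_eq_bounded_closed bounded_Int)
  have "\<exists>z. r0 \<le> z \<and> z \<le> 1 \<and> c z = 0"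
    by (intro IVT'[of c r0 0 1]) (use cr0 c1 r0 ccs[of r0 1] in auto)
  then obtain z where z: "r0 \<le> z" "z \<le> 1" "c z = 0" by blast
  then have "Z1 \<noteq> {}" unfolding Z1_def by auto
  then obtain t where t: "t \<in> Z1" "\<forall>x\<in>Z1. t \<le> x" using compact_attains_inf[OF cZ1] by blast
  have ct: "c t = 0" "r0 \<le> t" "t \<le> 1" using t(1) unfolding Z1_def by auto
  have tr: "r0 < t" "t < 1" using ct cr0 c1 by (auto simp: order.order_iff_strict)
  have negt: "c x < 0" if "r0 \<le> x" "x < t" for x
  proof (rule ccontr)
    assume "\<not> c x < 0"
    then have "\<exists>w. r0 \<le> w \<and> w \<le> x \<and> c w = 0"
      by (intro IVT'[of c r0 0 x]) (use cr0 that ct r0 ccs[of r0 x] in auto)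
    then obtain w where w: "r0 \<le> w" "w \<le> x" "c w = 0" by blast
    then have "w \<in> Z1" using that ct unfolding Z1_def by auto
    then show False using t(2) w that by force
  qed
  have c't: "c' t \<ge> 0"
  proof (rule ccontr)
    assume "\<not> c' t \<ge> 0"
    then obtain d where d: "d > 0" "\<forall>h>0. t - h \<in> {0<..1} \<longrightarrow> h < d \<longrightarrow> c t < c (t - h)"
      using has_real_derivative_neg_dec_left[OF dc[of t]] tr r0 by auto
    define h where "h = min (d/2) (t - r0)"
    have "c (t - h) > 0" using d ct tr r0 unfolding h_def by auto
    moreover have "c (t - h) < 0" using negt[of "t - h"] d tr unfolding h_def by auto
    ultimately show False by simp
  qed
  have Gt: "G t \<ge> 0"
  proof -
    have "pp n k t > 0" using pp_pos tr r0 by auto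
    moreover have "phi t > 0" using posp tr r0 by auto
    ultimately show ?thesis unfolding G_def GG_def using c't ct by simp
  qed
  
  define Z2 where "Z2 = {0..r0} \<inter> c -` {0}"
  have "closed Z2" unfolding Z2_def
    by (rule continuous_closed_preimage) (use ccs r0 in auto)
  then have cZ2: "compact Z2" unfolding Z2_def by (simp add: compact_eq_bounded_closed bounded_Int)
  have case_split: "(\<forall>x. 0 < x \<and> x \<le> r0 \<longrightarrow> c x < 0) \<or>
     (\<exists>s. 0 < s \<and> s < r0 \<and> c s = 0 \<and> (\<forall>x. s < x \<and> x \<le> r0 \<longrightarrow> c x < 0))"
  proof (cases "Z2 = {}")
    case True
    have "c x < 0" if "0 < x" "x \<le> r0" for x
    proof (rule ccontr)
      assume "\<not> c x < 0"
      then have "\<exists>w. x \<le> w \<and> w \<le> r0 \<and> c w = 0"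
        by (intro IVT2'[of c r0 0 x]) (use cr0 that r0 ccs[of x r0] in auto)
      then obtain w where w: "x \<le> w" "w \<le> r0" "c w = 0" by blast
      then have "w \<in> Z2" using that unfolding Z2_def by auto
      then show False using True by auto
    qed
    then show ?thesis by auto
  next
    case False
    then obtain s where s: "s \<in> Z2" "\<forall>x\<in>Z2. x \<le> s" using compact_attains_sup[OF cZ2] by blast
    have cs: "c s = 0" "0 \<le> s" "s \<le> r0" using s(1) unfolding Z2_def by auto
    have neg: "c x < 0" if "s < x" "x \<le> r0" for x
    proof (rule ccontr)
      assume "\<not> c x < 0"
      then have "\<exists>w. x \<le> w \<and> w \<le> r0 \<and> c w = 0"
        by (intro IVT2'[of c r0 0 x]) (use cr0 that r0 cs ccs[of x r0] in auto)
      then obtain w where w: "x \<le> w" "w \<le> r0" "c w = 0" by blast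
      then have "w \<in> Z2" using that cs unfolding Z2_def by auto
      then show False using s(2) w that by force
    qed
    show ?thesis
    proof (cases "s = 0")
      case True then show ?thesis using neg by auto
    next
      case False
      then have "0 < s" "s < r0" using cs cr0 by (auto simp: order.order_iff_strict)
      then show ?thesis using cs neg by blast
    qed
  qed
  then show False
  proof
    assume neg: "\<forall>x. 0 < x \<and> x \<le> r0 \<longrightarrow> c x < 0"
    have negall: "\<forall>z. 0 < z \<and> z < t \<longrightarrow> c z < 0"
    proof (intro allI impI)
      fix z assume z: "0 < z \<and> z < t"
      show "c z < 0"
      proof (cases "z \<le> r0")
        case True then show ?thesis using neg z by auto
      next
        case False then show ?thesis using negt z by auto
      qed
    qed
    have t2: "G t < G (t/2)"
      using dec[of "t/2" t] negall tr r0 by auto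
    have "G (t/2) \<le> 0"
    proof (rule tendsto_lowerbound[OF Glim])
      have "eventually (\<lambda>x. 0 < x \<and> x < t/2) (at_right (0::real))"
        unfolding eventually_at_right_field using tr r0 by (intro exI[of _ "t/2"]) auto
      then show "\<forall>\<^sub>F x in at_right 0. G (t/2) \<le> G x"
        by eventually_elim (use dec negall tr in \<open>auto intro: less_imp_le\<close>)
    qed simp
    then show False using t2 Gt by simp
  next
    assume "\<exists>s. 0 < s \<and> s < r0 \<and> c s = 0 \<and> (\<forall>x. s < x \<and> x \<le> r0 \<longrightarrow> c x < 0)"
    then obtain s where s: "0 < s" "s < r0" "c s = 0" "\<forall>x. s < x \<and> x \<le> r0 \<longrightarrow> c x < 0" by blast
    have negall: "\<forall>z. s < z \<and> z < t \<longrightarrow> c z < 0"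
    proof (intro allI impI)
      fix z assume z: "s < z \<and> z < t"
      show "c z < 0"
      proof (cases "z \<le> r0")
        case True then show ?thesis using s(4) z by auto
      next
        case False then show ?thesis using negt z by auto
      qed
    qed
    have c's: "c' s \<le> 0"
    proof (rule ccontr)
      assume "\<not> c' s \<le> 0"
      then obtain d where d: "d > 0" "\<forall>h>0. s + h \<in> {0<..1} \<longrightarrow> h < d \<longrightarrow> c s < c (s + h)"
        using has_real_derivative_pos_inc_right[OF dc[of s]] s r0 by auto
      define h where "h = min (d/2) (r0 - s)"
      have "c (s + h) > 0" using d s r0 unfolding h_def by auto
      moreover have "c (s + h) < 0" using s(4) d s unfolding h_def by auto
      ultimately show False by simp
    qed
    have Gs: "G s \<le> 0"
    proof -
      have "pp n k s > 0" using pp_pos s r0 by auto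
      moreover have "phi s > 0" using posp s r0 by auto
      ultimately show ?thesis unfolding G_def GG_def using c's s(3)
        by (simp add: mult_nonneg_nonpos mult_nonpos_nonneg)
    qed
    have "G t < G s" using dec[of s t] negall s tr by auto
    then show False using Gs Gt by simp
  qed
qed



lemma X_upper:
  assumes n2: "n \<ge> 2" and rsp: "radial_sol n k lam phi phi' phi''"
    and posp: "\<forall>r\<in>{0..<1}. phi r > 0" and bp: "bounded (phi ` {0<..1})" and z: "phi 1 = 0"
    and M: "\<forall>r\<in>{0<..1}. phi r \<le> M" "M > 0"
    and eps: "\<epsilon> > 0" and mu0: "lam - \<epsilon> \<ge> 0" and rsc: "radial_sol n k (lam - \<epsilon>) c c' c''"
    and cc: "continuous_on {0..1} c" and c1: "c 1 = - phi' 1" and a: "phi' 1 < 0"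
  shows "c' 1 \<le> - (lam - \<epsilon>) * (phi' 1)\<^sup>2 / (\<epsilon> * M)"
proof -
  define mu where "mu = lam - \<epsilon>"
  define G where "G = GG n k c c' phi phi'"
  define F where "F r = M * (pp n k r * c' r) + (mu / \<epsilon>) * G r" for r
  have cpos: "c r \<ge> 0" if "r \<in> {0<..1}" for r
  proof (cases "r = 1")
    case True then show ?thesis using c1 a by simp
  next
    case False
    then show ?thesis using positivity[OF n2 rsp posp bp eps rsc cc, of r] c1 a that by auto
  qed
  have Fd: "(F has_real_derivative (M * (- mu * pp n k r * c r) + (mu / \<epsilon>) * ((lam - mu) * pp n k r * c r * phi r)))
     (at r within {0<..1})" if "r \<in> {0<..1}" for r
    unfolding F_def[abs_def] G_def mu_def
    by (intro DERIV_add DERIV_cmult flux_deriv[OF n2 rsc that] GG_deriv[OF n2 rsp rsc that])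
  have Fle: "F 1 \<le> F r" if rr: "0 < r" "r < 1" for r
  proof -
    obtain \<xi> where \<xi>: "r < \<xi>" "\<xi> < 1"
      "F 1 - F r = (M * (- mu * pp n k \<xi> * c \<xi>) + (mu / \<epsilon>) * ((lam - mu) * pp n k \<xi> * c \<xi> * phi \<xi>)) * (1 - r)"
      using mvt01[OF rr(1) rr(2) order_refl, of F "\<lambda>r. M * (- mu * pp n k r * c r) + (mu / \<epsilon>) * ((lam - mu) * pp n k r * c r * phi r)"] Fd by blast
    have "M * (- mu * pp n k \<xi> * c \<xi>) + (mu / \<epsilon>) * ((lam - mu) * pp n k \<xi> * c \<xi> * phi \<xi>)
        = - mu * pp n k \<xi> * c \<xi> * (M - phi \<xi>)"
      using eps unfolding mu_def by (simp add: field_simps)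
    moreover have "mu * pp n k \<xi> * c \<xi> * (M - phi \<xi>) \<ge> 0"
      using mu0 pp_pos[of \<xi> n k] cpos[of \<xi>] M \<xi> rr unfolding mu_def
      by (intro mult_nonneg_nonneg) auto
    ultimately have "M * (- mu * pp n k \<xi> * c \<xi>) + (mu / \<epsilon>) * ((lam - mu) * pp n k \<xi> * c \<xi> * phi \<xi>) \<le> 0"
      by simp
    then have "(M * (- mu * pp n k \<xi> * c \<xi>) + (mu / \<epsilon>) * ((lam - mu) * pp n k \<xi> * c \<xi> * phi \<xi>)) * (1 - r) \<le> 0"
      using rr by (intro mult_nonpos_nonneg) auto
    then show ?thesis using \<xi>(3) by linarith
  qed
  have bc: "bounded (c ` {0<..1})"
  proof -
    have "compact (c ` {0..1})" by (intro compact_continuous_image cc) auto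
    then have "bounded (c ` {0..1})" by (rule compact_imp_bounded)
    then show ?thesis by (rule bounded_subset) auto
  qed
  have Flim0: "(F \<longlongrightarrow> M * 0 + (mu / \<epsilon>) * 0) (at_right 0)"
    unfolding F_def[abs_def] G_def mu_def
    by (intro tendsto_intros flux_lim[OF n2 rsc bc] GG_lim[OF n2 rsp bp rsc bc])
  then have Flim: "(F \<longlongrightarrow> 0) (at_right 0)" by simp
  have "F 1 \<le> 0"
  proof (rule tendsto_lowerbound[OF Flim])
    have "eventually (\<lambda>x. 0 < x \<and> x < 1) (at_right (0::real))"
      unfolding eventually_at_right_field by (intro exI[of _ 1]) auto
    then show "\<forall>\<^sub>F x in at_right 0. F 1 \<le> F x" by eventually_elim (use Fle in auto)
  qed simp
  moreover have "F 1 = pp n k 1 * (M * c' 1 + (mu / \<epsilon>) * (phi' 1)\<^sup>2)"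
    unfolding F_def G_def GG_def using z c1 by (simp add: algebra_simps power2_eq_square)
  ultimately have "M * c' 1 + (mu / \<epsilon>) * (phi' 1)\<^sup>2 \<le> 0"
    using pp_pos[of 1 n k] by (simp add: mult_le_0_iff)
  then have "M * c' 1 \<le> - mu * (phi' 1)\<^sup>2 / \<epsilon>" by simp
  then show ?thesis using M eps unfolding mu_def by (simp add: field_simps)
qed



lemma X_lower:
  assumes n2: "n \<ge> 2" and rsp: "radial_sol n k lam phi phi' phi''"
    and posp: "\<forall>r\<in>{0..<1}. phi r > 0" and bp: "bounded (phi ` {0<..1})"
    and eps: "\<epsilon> > 0" and neg: "lam - \<epsilon> < 0" and rsc: "radial_sol n k (lam - \<epsilon>) c c' c''"
    and cc: "continuous_on {0..1} c" and c1: "c 1 = - phi' 1" and a: "phi' 1 < 0"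
    and p0: "p0 > 0" "\<forall>r\<in>{1/2..1}. p0 \<le> pp n k r"
    and Mx: "Mx > 0" "c' 1 \<le> Mx"
  shows "(\<epsilon> - lam) * (p0 * (- phi' 1) * min (1/2) ((- phi' 1) / (2 * (pp n k 1 * Mx / p0))))
     \<le> 2 * pp n k 1 * Mx"
proof -
  define A where "A = - phi' 1"
  have A0: "A > 0" using a unfolding A_def by simp
  define N where "N = \<epsilon> - lam"
  have N0: "N > 0" using neg unfolding N_def by simp
  define p1 where "p1 = pp n k 1"
  have p10: "p1 > 0" unfolding p1_def using pp_pos by auto
  define K where "K = p1 * Mx / p0"
  have K0: "K > 0" unfolding K_def using p10 Mx p0 by simp
  define \<delta> where "\<delta> = min (1/2) (A / (2 * K))"
  have d0: "\<delta> > 0" "\<delta> \<le> 1/2" "K * \<delta> \<le> A / 2"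
    unfolding \<delta>_def using A0 K0 by (auto simp: min_def field_simps)
  define h where "h r = pp n k r * c' r" for r
  have cpos: "c r \<ge> 0" if "r \<in> {0<..1}" for r
  proof (cases "r = 1")
    case True then show ?thesis using c1 a by simp
  next
    case False
    then show ?thesis using positivity[OF n2 rsp posp bp eps rsc cc, of r] c1 a that by auto
  qed
  have hd: "(h has_real_derivative (N * pp n k r * c r)) (at r within {0<..1})" if "r \<in> {0<..1}" for r
    using flux_deriv[OF n2 rsc that] unfolding h_def[abs_def] N_def by simp
  have hmono: "h x \<le> h y" if xy: "0 < x" "x < y" "y \<le> 1" for x y
  proof -
    obtain \<xi> where \<xi>: "x < \<xi>" "\<xi> < y" "h y - h x = (N * pp n k \<xi> * c \<xi>) * (y - x)"
      using mvt01[OF xy, of h "\<lambda>r. N * pp n k r * c r"] hd by blast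
    have "N * pp n k \<xi> * c \<xi> \<ge> 0"
      using N0 pp_pos[of \<xi> n k] cpos[of \<xi>] \<xi> xy by (intro mult_nonneg_nonneg) auto
    then have "(N * pp n k \<xi> * c \<xi>) * (y - x) \<ge> 0" using xy by simp
    then show ?thesis using \<xi> by simp
  qed
  have bc: "bounded (c ` {0<..1})"
  proof -
    have "compact (c ` {0..1})" by (intro compact_continuous_image cc) auto
    then have "bounded (c ` {0..1})" by (rule compact_imp_bounded)
    then show ?thesis by (rule bounded_subset) auto
  qed
  have hlim: "(h \<longlongrightarrow> 0) (at_right 0)"
    unfolding h_def[abs_def] by (rule flux_lim[OF n2 rsc bc])
  have hnn: "h x \<ge> 0" if "0 < x" "x \<le> 1" for x
  proof (rule tendsto_upperbound[OF hlim])
    have "eventually (\<lambda>r. 0 < r \<and> r < x) (at_right (0::real))"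
      unfolding eventually_at_right_field using that by (intro exI[of _ x]) auto
    then show "\<forall>\<^sub>F r in at_right 0. h r \<le> h x" by eventually_elim (use hmono that in auto)
  qed simp
  have h1: "h 1 \<le> p1 * Mx" unfolding h_def p1_def using Mx pp_pos[of 1 n k]
    by (simp add: mult_left_mono)
  have c'b: "c' r \<le> K" if "1/2 \<le> r" "r \<le> 1" for r
  proof -
    have pr: "pp n k r \<ge> p0" using p0 that by auto
    have hr: "h r \<ge> 0" "h r \<le> p1 * Mx"
      using hnn[of r] hmono[of r 1] h1 that by (auto simp: order.order_iff_strict)
    have "c' r = h r / pp n k r" unfolding h_def using pr p0 by simp
    also have "\<dots> \<le> h r / p0" using hr pr p0 by (intro divide_left_mono) auto
    also have "\<dots> \<le> p1 * Mx / p0" using hr p0 by (intro divide_right_mono) auto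
    finally show ?thesis unfolding K_def .
  qed
  have cbig: "c r \<ge> A / 2" if "1 - \<delta> \<le> r" "r \<le> 1" for r
  proof (cases "r = 1")
    case True then show ?thesis using c1 A0 unfolding A_def by simp
  next
    case False
    then have r: "0 < r" "r < 1" using that d0 by auto
    obtain \<xi> where \<xi>: "r < \<xi>" "\<xi> < 1" "c 1 - c r = c' \<xi> * (1 - r)"
      using mvt01[OF r order_refl, of c c'] rsc unfolding radial_sol_def by blast
    have "c' \<xi> \<le> K" using c'b[of \<xi>] \<xi> that d0 by auto
    then have "c' \<xi> * (1 - r) \<le> K * (1 - r)" using r by (intro mult_right_mono) auto
    also have "\<dots> \<le> K * \<delta>" using K0 that by (intro mult_left_mono) auto
    finally have "c 1 - c r \<le> A / 2" using \<xi> d0 by simp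
    then show ?thesis using c1 unfolding A_def by simp
  qed
  obtain \<xi> where \<xi>: "1 - \<delta> < \<xi>" "\<xi> < 1" "h 1 - h (1 - \<delta>) = (N * pp n k \<xi> * c \<xi>) * (1 - (1 - \<delta>))"
    using mvt01[of "1 - \<delta>" 1 h "\<lambda>r. N * pp n k r * c r"] hd d0 by auto
  have px: "pp n k \<xi> \<ge> p0" using p0 \<xi> d0 by auto
  have "N * p0 * (A / 2) \<le> N * pp n k \<xi> * c \<xi>"
  proof -
    have "N * p0 \<le> N * pp n k \<xi>" using px N0 by (intro mult_left_mono) auto
    moreover have "A / 2 \<le> c \<xi>" using cbig[of \<xi>] \<xi> by auto
    moreover have "N * pp n k \<xi> \<ge> 0" "A / 2 \<ge> 0" using N0 p0 px A0 by auto
    ultimately show ?thesis by (rule mult_mono)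
  qed
  then have "N * p0 * (A / 2) * \<delta> \<le> (N * pp n k \<xi> * c \<xi>) * \<delta>"
    using d0 by (intro mult_right_mono) auto
  also have "\<dots> = h 1 - h (1 - \<delta>)" using \<xi> by simp
  also have "\<dots> \<le> h 1" using hnn[of "1 - \<delta>"] d0 by simp
  also have "\<dots> \<le> p1 * Mx" by (rule h1)
  finally have "N * p0 * (A / 2) * \<delta> \<le> p1 * Mx" .
  then have "N * (p0 * A * \<delta>) \<le> 2 * p1 * Mx" by (simp add: field_simps)
  then show ?thesis unfolding N_def A_def \<delta>_def K_def p1_def by simp
qed



theorem proposition7p1:
  fixes n :: nat and k :: int and lam1 :: real
    and phi phi' phi'' :: "real \<Rightarrow> real"
    and c c' c'' :: "real \<Rightarrow> real \<Rightarrow> real"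
  assumes "n \<ge> 2"
    and "k = 1 \<or> k = -1"
    and "first_eigenvalue n k lam1"
    and "dirichlet_eigenfunction n k lam1 phi phi' phi''"
    and "L2_normalized n k phi"
    and "\<forall>T>0. continuous_on {0..1} (c T) \<and>
               radial_sol n k (lam1 - (2 * pi / T)\<^sup>2) (c T) (c' T) (c'' T) \<and>
               c T 1 = - phi' 1"
  shows "filterlim (\<lambda>T. c' T 1 + phi'' 1) at_top (at_right 0) \<and>
         filterlim (\<lambda>T. c' T 1 + phi'' 1) at_bot at_top"
proof -
  note n2 = assms(1)
  have rsp: "radial_sol n k lam1 phi phi' phi''" and bp: "bounded (phi ` {0<..1})"
    and posp: "\<forall>r\<in>{0..<1}. phi r > 0" and z: "phi 1 = 0"
    using assms(4) unfolding dirichlet_eigenfunction_def by auto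
  have lam0: "lam1 > 0" using assms(3) unfolding first_eigenvalue_def Let_def by auto
  have a: "phi' 1 < 0" by (rule hopf[OF rsp posp z])
  define A where "A = - phi' 1"
  have A0: "A > 0" unfolding A_def using a by simp
  obtain B where B: "\<forall>r\<in>{0<..1}. \<bar>phi r\<bar> \<le> B" using bp unfolding bounded_iff by auto
  define M where "M = max B 1"
  have M: "\<forall>r\<in>{0<..1}. phi r \<le> M" "M > 0" using B unfolding M_def by force+
  have "continuous_on {1/2..1} (pp n k)"
    by (rule DERIV_continuous_on[OF pp_deriv])
  then obtain x0 where x0: "x0 \<in> {1/2..1}" "\<forall>y\<in>{1/2..1}. pp n k x0 \<le> pp n k y"
    using continuous_attains_inf[of "{1/2..1::real}" "pp n k"] by auto
  define p0 where "p0 = pp n k x0"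
  have p0: "p0 > 0" "\<forall>r\<in>{1/2..1}. p0 \<le> pp n k r"
    unfolding p0_def using x0 pp_pos[of x0 n k] by auto
  define p1 where "p1 = pp n k 1"
  have cT: "continuous_on {0..1} (c T)" "radial_sol n k (lam1 - (2 * pi / T)\<^sup>2) (c T) (c' T) (c'' T)"
    "c T 1 = - phi' 1" if "T > 0" for T
    using assms(6) that by auto
  have epos: "(2 * pi / T)\<^sup>2 > 0" if "T > 0" for T using that by simp
  have part1: "filterlim (\<lambda>T. c' T 1 + phi'' 1) at_top (at_right 0)"
    unfolding filterlim_at_top
  proof
    fix Z :: real
    define Mx where "Mx = max 1 (Z - phi'' 1 + 1)"
    have Mx0: "Mx > 0" unfolding Mx_def by simp
    define \<delta> where "\<delta> = min (1/2) (A / (2 * (p1 * Mx / p0)))"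
    have d0: "\<delta> > 0" unfolding \<delta>_def using A0 p0 Mx0 pp_pos[of 1 n k] unfolding p1_def by auto
    define Q where "Q = 2 * p1 * Mx / (p0 * A * \<delta>)"
    define W where "W = lam1 + Q + 1"
    have Q0: "Q > 0" unfolding Q_def p1_def using pp_pos[of 1 n k] Mx0 p0 A0 d0 by simp
    have W0: "W > 0" unfolding W_def using Q0 lam0 by simp
    have big: "c' T 1 > Mx" if T: "T > 0" "(2 * pi / T)\<^sup>2 > W" for T
    proof (rule ccontr)
      assume "\<not> c' T 1 > Mx"
      then have X: "c' T 1 \<le> Mx" by simp
      have "((2 * pi / T)\<^sup>2 - lam1) * (p0 * A * \<delta>) \<le> 2 * p1 * Mx"
        using X_lower[OF n2 rsp posp bp epos[OF T(1)] _ cT(2)[OF T(1)] cT(1)[OF T(1)] cT(3)[OF T(1)] a p0 Mx0 X]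
          T W0 Q0 lam0 unfolding A_def \<delta>_def p1_def W_def by auto
      moreover have D0: "p0 * A * \<delta> > 0" using p0 A0 d0 by simp
      ultimately have "(2 * pi / T)\<^sup>2 - lam1 \<le> Q" unfolding Q_def
        using pos_le_divide_eq[OF D0, of "(2 * pi / T)\<^sup>2 - lam1" "2 * p1 * Mx"] by blast
      then show False using T unfolding W_def by simp
    qed
    have ev: "eventually (\<lambda>T. 0 < T \<and> T < 2 * pi / sqrt W) (at_right (0::real))"
      unfolding eventually_at_right_field using W0 by (intro exI[of _ "2 * pi / sqrt W"]) auto
    show "\<forall>\<^sub>F T in at_right 0. Z \<le> c' T 1 + phi'' 1"
      using ev
    proof eventually_elim
      case (elim T)
      then have T: "0 < T" "T < 2 * pi / sqrt W" by auto
      have "T * sqrt W < 2 * pi" using T W0 by (simp add: field_simps)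
      then have "sqrt W < 2 * pi / T" using T by (simp add: field_simps)
      then have "(sqrt W)\<^sup>2 < (2 * pi / T)\<^sup>2" using W0 by (intro power_strict_mono) auto
      then have "(2 * pi / T)\<^sup>2 > W" using W0 by simp
      then have "c' T 1 > Mx" using big T by auto
      then show ?case unfolding Mx_def by linarith
    qed
  qed
  have part2: "filterlim (\<lambda>T. c' T 1 + phi'' 1) at_bot at_top"
    unfolding filterlim_at_bot
  proof
    fix Z :: real
    define W where "W = Z - phi'' 1"
    define e0 where "e0 = min (lam1 / 2) (lam1 * A\<^sup>2 / (2 * M * (\<bar>W\<bar> + 1)))"
    have e00: "e0 > 0" unfolding e0_def using lam0 A0 M by auto
    have ev: "eventually (\<lambda>T. T \<ge> 2 * pi / sqrt e0) at_top"
      by (rule eventually_ge_at_top)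
    show "\<forall>\<^sub>F T in at_top. c' T 1 + phi'' 1 \<le> Z"
      using ev
    proof eventually_elim
      case (elim T)
      have T0: "T > 0" using elim e00 by (smt (verit) divide_pos_pos pi_gt_zero real_sqrt_gt_zero)
      define \<epsilon> where "\<epsilon> = (2 * pi / T)\<^sup>2"
      have eps: "\<epsilon> > 0" unfolding \<epsilon>_def using T0 by simp
      have "2 * pi \<le> T * sqrt e0" using elim e00 by (simp add: field_simps)
      then have "2 * pi / T \<le> sqrt e0" using T0 by (simp add: field_simps)
      then have "(2 * pi / T)\<^sup>2 \<le> (sqrt e0)\<^sup>2" using T0 by (intro power_mono) auto
      then have ee: "\<epsilon> \<le> e0" unfolding \<epsilon>_def using e00 by simp
      then have mu: "lam1 - \<epsilon> \<ge> lam1 / 2" unfolding e0_def by simp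
      have e2: "\<epsilon> \<le> lam1 * A\<^sup>2 / (2 * M * (\<bar>W\<bar> + 1))" using ee unfolding e0_def by simp
      have mu0: "lam1 - (2 * pi / T)\<^sup>2 \<ge> 0" using mu lam0 unfolding \<epsilon>_def by simp
      have X: "c' T 1 \<le> - (lam1 - \<epsilon>) * (phi' 1)\<^sup>2 / (\<epsilon> * M)"
        unfolding \<epsilon>_def
        by (rule X_upper[OF n2 rsp posp bp z M epos[OF T0] mu0 cT(2)[OF T0] cT(1)[OF T0] cT(3)[OF T0] a])
      have D0: "2 * M * (\<bar>W\<bar> + 1) > 0" using M by (simp add: add_pos_nonneg)
      have "\<epsilon> * (2 * M * (\<bar>W\<bar> + 1)) \<le> lam1 * A\<^sup>2"
        using e2 pos_le_divide_eq[OF D0] by blast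
      then have "\<epsilon> * M * (\<bar>W\<bar> + 1) \<le> lam1 * A\<^sup>2 / 2"
        by (simp add: algebra_simps)
      also have "\<dots> = (lam1 / 2) * A\<^sup>2" by simp
      also have "\<dots> \<le> (lam1 - \<epsilon>) * A\<^sup>2" using mu by (rule mult_right_mono) simp
      finally have "\<epsilon> * M * (\<bar>W\<bar> + 1) \<le> (lam1 - \<epsilon>) * A\<^sup>2" .
      then have "\<bar>W\<bar> + 1 \<le> (lam1 - \<epsilon>) * A\<^sup>2 / (\<epsilon> * M)" using eps M by (simp add: field_simps)
      moreover have "- (lam1 - \<epsilon>) * (phi' 1)\<^sup>2 / (\<epsilon> * M) = - ((lam1 - \<epsilon>) * A\<^sup>2 / (\<epsilon> * M))"
        unfolding A_def by (simp only: power2_minus mult_minus_left minus_divide_left)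
      ultimately have "c' T 1 \<le> - (\<bar>W\<bar> + 1)" using X by linarith
      then show ?case unfolding W_def by linarith
    qed
  qed
  show ?thesis using part1 part2 by simp
qed


end
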